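(* Under the hypotheses of the following statement, the vectors $u_1$ and $u_2$ can be chosen nonnegative. Statement: Let $\mathcal{A}\in\mathbb{R}^{m\times m\times n}$ be $(1,2)$-symmetric and nonnegative with $\mathcal{A}=\begin{pmatrix}\mathcal{A}_1&0\\0&\mathcal{A}_2\end{pmatrix}$, $\mathcal{A}_i\in\mathbb{R}^{m_i\times m_i\times n}$, $m_1+m_2=m$, $\mathcal{A}_1,\mathcal{A}_2$ irreducible; with $\varphi$ as defined in the context, assume $\varphi(\mathcal{A})<\varphi(\mathcal{A}_1)+\|\mathcal{A}_2\|^2$, $\varphi(\mathcal{A})<\varphi(\mathcal{A}_2)+\|\mathcal{A}_1\|^2$, and that the solution $(U,U,W)$ of the $(1,2)$-symmetric best rank-$(2,2,2)$ approximation problem for $\mathcal{A}$ is unique; then a representative has $U=\begin{pmatrix}u_1&0\\0&u_2\end{pmatrix}$ with $u_1\in\mathbb{R}^{m_1}$, $u_2\in\mathbb{R}^{m_2}$.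
   Context: A tensor is $(1,2)$-symmetric if $\mathcal{A}(i,j,k)=\mathcal{A}(j,i,k)$. It is (1,2)-reducible if there exist nonempty proper $I\subset\{1,\dots,m\}$ and nonempty $K\subseteq\{1,\dots,n\}$ with $a_{ijk}=a_{jik}=0$ for $i\in I,j\notin I,k\in K$; 3-reducible if $a_{ijk}=0$ for $i,j\in I,k\in K$; irreducible if neither holds for any $I,K$. $(X,Y,Z)\cdot\mathcal{H}$ has entries $\sum x_{i\alpha}y_{j\beta}z_{k\gamma}h_{\alpha\beta\gamma}$; $\mathcal{A}\cdot(X,Y,Z):=(X^T,Y^T,Z^T)\cdot\mathcal{A}$; Frobenius norm. For $(1,2)$-symmetric $\mathcal{B}\in\mathbb{R}^{k\times k\times n}$, $\varphi(\mathcal{B})=\min\|\mathcal{B}-(X,X,Z)\cdot\mathcal{H}\|^2$ over $X\in\mathbb{R}^{k\times2}$, $Z\in\mathbb{R}^{n\times2}$ with orthonormal columns and $\mathcal{H}\in\mathbb{R}^{2\times2\times2}$. The $(1,2)$-symmetric best rank-$(2,2,2)$ approximation problem is $\max\|\mathcal{A}\cdot(X,X,Z)\|$ over $X^TX=I_2,Z^TZ=I_2$; solutions are equivalence classes under $(U,U,W)\mapsto(UQ_1,UQ_1,WQ_3)$ with $Q_1,Q_3$ orthogonal. *)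

theory Defs
  imports Main "HOL-Analysis.Analysis"
begin

text \<open>Third-order real tensors of size p x q x r are represented as functions
  nat => nat => nat => real, with indices starting at 0; only entries with
  i < p, j < q, k < r are meaningful.  Matrices of size p x 2 are
  functions nat => nat => real (row index, column index).\<close>

type_synonym tensor3 = "nat \<Rightarrow> nat \<Rightarrow> nat \<Rightarrow> real"
type_synonym matrix = "nat \<Rightarrow> nat \<Rightarrow> real"

definition sym12 :: "tensor3 \<Rightarrow> nat \<Rightarrow> nat \<Rightarrow> bool" where
  "sym12 A m n \<longleftrightarrow> (\<forall>i<m. \<forall>j<m. \<forall>k<n. A i j k = A j i k)"

definition nonneg3 :: "tensor3 \<Rightarrow> nat \<Rightarrow> nat \<Rightarrow> bool" where
  "nonneg3 A m n \<longleftrightarrow> (\<forall>i<m. \<forall>j<m. \<forall>k<n. A i j k \<ge> 0)"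

definition reducible12 :: "tensor3 \<Rightarrow> nat \<Rightarrow> nat \<Rightarrow> bool" where
  "reducible12 A m n \<longleftrightarrow> (\<exists>I K. I \<noteq> {} \<and> I \<subset> {..<m} \<and> K \<noteq> {} \<and> K \<subseteq> {..<n} \<and>
     (\<forall>i\<in>I. \<forall>j\<in>{..<m} - I. \<forall>k\<in>K. A i j k = 0 \<and> A j i k = 0))"

definition reducible3 :: "tensor3 \<Rightarrow> nat \<Rightarrow> nat \<Rightarrow> bool" where
  "reducible3 A m n \<longleftrightarrow> (\<exists>I K. I \<noteq> {} \<and> I \<subset> {..<m} \<and> K \<noteq> {} \<and> K \<subseteq> {..<n} \<and>
     (\<forall>i\<in>I. \<forall>j\<in>I. \<forall>k\<in>K. A i j k = 0))"

definition irreducible3 :: "tensor3 \<Rightarrow> nat \<Rightarrow> nat \<Rightarrow> bool" where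
  "irreducible3 A m n \<longleftrightarrow> \<not> reducible12 A m n \<and> \<not> reducible3 A m n"

definition frob2 :: "tensor3 \<Rightarrow> nat \<Rightarrow> nat \<Rightarrow> nat \<Rightarrow> real" where
  "frob2 T p q r = (\<Sum>i<p. \<Sum>j<q. \<Sum>k<r. (T i j k)\<^sup>2)"

definition orth2 :: "nat \<Rightarrow> matrix \<Rightarrow> bool" where
  "orth2 p X \<longleftrightarrow> (\<forall>a<2. \<forall>b<2. (\<Sum>i<p. X i a * X i b) = (if a = b then 1 else 0))"

definition tucker :: "matrix \<Rightarrow> matrix \<Rightarrow> matrix \<Rightarrow> tensor3 \<Rightarrow> tensor3" where
  "tucker X Y Z H = (\<lambda>i j k. \<Sum>\<alpha><2. \<Sum>\<beta><2. \<Sum>\<gamma><2. X i \<alpha> * Y j \<beta> * Z k \<gamma> * H \<alpha> \<beta> \<gamma>)"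

definition proj :: "tensor3 \<Rightarrow> nat \<Rightarrow> nat \<Rightarrow> matrix \<Rightarrow> matrix \<Rightarrow> matrix \<Rightarrow> tensor3" where
  "proj A m n X Y Z = (\<lambda>a b c. \<Sum>i<m. \<Sum>j<m. \<Sum>k<n. X i a * Y j b * Z k c * A i j k)"

text \<open>phi(B) for a (1,2)-symmetric k x k x n tensor B (the minimum is attained,
  so it equals the infimum).\<close>
definition phi :: "tensor3 \<Rightarrow> nat \<Rightarrow> nat \<Rightarrow> real" where
  "phi B k n = Inf {frob2 (\<lambda>i j l. B i j l - tucker X X Z H i j l) k k n
                     | X Z H. orth2 k X \<and> orth2 n Z}"

definition best222 :: "tensor3 \<Rightarrow> nat \<Rightarrow> nat \<Rightarrow> matrix \<Rightarrow> matrix \<Rightarrow> bool" where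
  "best222 A m n U W \<longleftrightarrow> orth2 m U \<and> orth2 n W \<and>
     (\<forall>X Z. orth2 m X \<and> orth2 n Z \<longrightarrow>
        sqrt (frob2 (proj A m n X X Z) 2 2 2) \<le> sqrt (frob2 (proj A m n U U W) 2 2 2))"

definition orthogonal2 :: "matrix \<Rightarrow> bool" where
  "orthogonal2 Q \<longleftrightarrow> orth2 2 Q"

definition equiv222 :: "nat \<Rightarrow> nat \<Rightarrow> matrix \<Rightarrow> matrix \<Rightarrow> matrix \<Rightarrow> matrix \<Rightarrow> bool" where
  "equiv222 m n U W U' W' \<longleftrightarrow> (\<exists>Q1 Q3. orthogonal2 Q1 \<and> orthogonal2 Q3 \<and>
     (\<forall>i<m. \<forall>a<2. U' i a = (\<Sum>b<2. U i b * Q1 b a)) \<and>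
     (\<forall>k<n. \<forall>c<2. W' k c = (\<Sum>d<2. W k d * Q3 d c)))"

definition unique_best222 :: "tensor3 \<Rightarrow> nat \<Rightarrow> nat \<Rightarrow> bool" where
  "unique_best222 A m n \<longleftrightarrow> (\<forall>U W U' W'. best222 A m n U W \<and> best222 A m n U' W' \<longrightarrow>
      equiv222 m n U W U' W')"

end

theory Submission
  imports Defs
begin

definition gv :: "tensor3 \<Rightarrow> nat \<Rightarrow> nat \<Rightarrow> matrix \<Rightarrow> matrix \<Rightarrow> real" where
  "gv A m n X Z = frob2 (proj A m n X X Z) 2 2 2"

lemma sum2: "(\<Sum>a<(2::nat). f a) = f 0 + f 1"
  by (simp add: numeral_2_eq_2)

definition trunc :: "nat \<Rightarrow> matrix \<Rightarrow> matrix" where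
  "trunc p X = (\<lambda>i a. if i < p \<and> a < 2 then X i a else 0)"

lemma orth2_trunc: "orth2 p (trunc p X) = orth2 p X"
  unfolding orth2_def trunc_def by simp

lemma gv_trunc: "gv A m n (trunc m X) (trunc n Z) = gv A m n X Z"
  unfolding gv_def frob2_def proj_def trunc_def
  by (simp add: sum2)

lemma orth2_bound: assumes "orth2 p X" "i < p" "a < 2" shows "\<bar>X i a\<bar> \<le> 1"
proof -
  have "(X i a)\<^sup>2 \<le> (\<Sum>j<p. X j a * X j a)"
    using member_le_sum[of i "{..<p}" "\<lambda>j. X j a * X j a"] assms(2) by (simp add: power2_eq_square)
  also have "\<dots> = 1" using assms(1,3) unfolding orth2_def by auto
  finally show ?thesis using abs_square_le_1 by blast
qed

lemma all2: "(\<forall>a<(2::nat). P a) \<longleftrightarrow> P 0 \<and> P 1"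
  by (auto simp: less_2_cases_iff)

lemma orth2_alt: "orth2 p X \<longleftrightarrow> (\<Sum>i<p. X i 0 * X i 0) = 1 \<and> (\<Sum>i<p. X i 1 * X i 1) = 1
   \<and> (\<Sum>i<p. X i 0 * X i 1) = 0 \<and> (\<Sum>i<p. X i 1 * X i 0) = 0"
  unfolding orth2_def all2 by auto

lemma cont_coord: "continuous_on UNIV (\<lambda>X::nat\<Rightarrow>nat\<Rightarrow>real. X i a)"
  using continuous_on_product_then_coordinatewise[OF continuous_on_product_coordinates[of i], of a] .


lemma compact_PiE_UNIV:
  fixes S :: "nat \<Rightarrow> 'b::topological_space set"
  assumes "\<And>i. compact (S i)"
  shows "compact (Pi\<^sub>E UNIV S)"
proof -
  have "compactin (product_topology (\<lambda>i. euclidean) UNIV) (Pi\<^sub>E UNIV S)"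
    using assms by (simp add: compactin_PiE)
  then show ?thesis by (simp add: euclidean_product_topology)
qed

definition box :: "nat \<Rightarrow> matrix set" where
  "box p = Pi\<^sub>E UNIV (\<lambda>i. Pi\<^sub>E UNIV (\<lambda>a. if i < p \<and> a < 2 then {-1..1::real} else {0}))"

lemma compact_box: "compact (box p)"
  unfolding box_def by (intro compact_PiE_UNIV) auto

lemma trunc_in_box: assumes "orth2 p X" shows "trunc p X \<in> box p"
  using orth2_bound[OF assms] unfolding box_def trunc_def
  by (auto simp: PiE_iff abs_le_iff)

lemma cont_fst [continuous_intros]: "continuous_on S (\<lambda>p::matrix\<times>matrix. fst p i a)"
proof -
  have h0: "continuous_on S (\<lambda>p::matrix\<times>matrix. fst p)" by (intro continuous_intros)
  have h1: "continuous_on S (\<lambda>p::matrix\<times>matrix. fst p i)" using continuous_on_product_then_coordinatewise[OF h0] .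
  show ?thesis using continuous_on_product_then_coordinatewise[OF h1] .
qed

lemma cont_snd [continuous_intros]: "continuous_on S (\<lambda>p::matrix\<times>matrix. snd p i a)"
proof -
  have h0: "continuous_on S (\<lambda>p::matrix\<times>matrix. snd p)" by (intro continuous_intros)
  have h1: "continuous_on S (\<lambda>p::matrix\<times>matrix. snd p i)" using continuous_on_product_then_coordinatewise[OF h0] .
  show ?thesis using continuous_on_product_then_coordinatewise[OF h1] .
qed

lemma closed_orth: "closed {p::matrix\<times>matrix. orth2 m (fst p) \<and> orth2 n (snd p)}"
  unfolding orth2_alt
  by (intro closed_Collect_conj closed_Collect_eq continuous_intros)

lemma exists_best:
  assumes "m \<ge> 2" "n \<ge> 2"
  shows "\<exists>U W. orth2 m U \<and> orth2 n W \<and>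
     (\<forall>X Z. orth2 m X \<and> orth2 n Z \<longrightarrow> gv A m n X Z \<le> gv A m n U W)"
proof -
  define F where "F = (box m \<times> box n) \<inter> {p::matrix\<times>matrix. orth2 m (fst p) \<and> orth2 n (snd p)}"
  have cF: "compact F" unfolding F_def
    by (intro compact_Int_closed compact_Times compact_box closed_orth)
  define E :: matrix where "E = (\<lambda>i a. if i = a then 1 else 0)"
  have oE: "orth2 p E" if "p \<ge> 2" for p
  proof -
    have "(\<Sum>i<p. E i a * E i b) = (if a = b then 1 else 0)" if "a < 2" "b < 2" for a b
    proof -
      have "(\<Sum>i<p. E i a * E i b) = (\<Sum>i\<in>{a}. (if a = b then 1 else 0))"
        by (rule sum.mono_neutral_cong_right) (use that \<open>p\<ge>2\<close> in \<open>auto simp: E_def\<close>)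
      then show ?thesis by simp
    qed
    then show ?thesis unfolding orth2_def by auto
  qed
  have "(trunc m E, trunc n E) \<in> F"
    unfolding F_def using oE assms trunc_in_box orth2_trunc by auto
  then have ne: "F \<noteq> {}" by auto
  have cg: "continuous_on F (\<lambda>p. gv A m n (fst p) (snd p))"
    unfolding gv_def frob2_def proj_def by (intro continuous_intros)
  obtain p where pF: "p \<in> F" and pmax: "\<And>q. q \<in> F \<Longrightarrow> gv A m n (fst q) (snd q) \<le> gv A m n (fst p) (snd p)"
    using continuous_attains_sup[OF cF ne cg] by blast
  show ?thesis
  proof (intro exI conjI allI impI)
    show "orth2 m (fst p)" "orth2 n (snd p)" using pF F_def by auto
    fix X Z assume "orth2 m X \<and> orth2 n Z"
    then have "(trunc m X, trunc n Z) \<in> F" unfolding F_def using trunc_in_box orth2_trunc by auto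
    from pmax[OF this] show "gv A m n X Z \<le> gv A m n (fst p) (snd p)" by (simp add: gv_trunc)
  qed
qed
lemma inner_tucker:
  "(\<Sum>i<p. \<Sum>j<p. \<Sum>k<q. B i j k * tucker X X Z H i j k) =
   (\<Sum>a<2. \<Sum>b<2. \<Sum>c<2. proj B p q X X Z a b c * H a b c)"
  unfolding tucker_def proj_def
  by (simp add: sum2 sum.distrib sum_distrib_left sum_distrib_right distrib_left distrib_right mult_ac)

lemma proj_tucker:
  assumes "orth2 p X" "orth2 q Z" "a < 2" "b < 2" "c < 2"
  shows "proj (tucker X X Z H) p q X X Z a b c = H a b c"
proof -
  have e: "proj (tucker X X Z H) p q X X Z a b c = 
    (\<Sum>\<alpha><2. \<Sum>\<beta><2. \<Sum>\<gamma><2. H \<alpha> \<beta> \<gamma> * (\<Sum>i<p. X i a * X i \<alpha>) * (\<Sum>j<p. X j b * X j \<beta>) * (\<Sum>k<q. Z k c * Z k \<gamma>))"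
    unfolding tucker_def proj_def
    by (simp add: sum2 sum.distrib sum_distrib_left sum_distrib_right distrib_left distrib_right mult_ac)
  show ?thesis unfolding e using assms unfolding orth2_def
    by (auto simp: sum2 less_2_cases_iff)
qed
lemma sum_split: "(\<Sum>i<p+(q::nat). f i) = (\<Sum>i<p. f i) + (\<Sum>i<q. f (i + p))"
  by (induction q) (auto simp: add.commute add.left_commute)

lemma frob2_tucker:
  assumes "orth2 p X" "orth2 q Z"
  shows "frob2 (tucker X X Z H) p p q = frob2 H 2 2 2"
proof -
  have "frob2 (tucker X X Z H) p p q = (\<Sum>i<p. \<Sum>j<p. \<Sum>k<q. tucker X X Z H i j k * tucker X X Z H i j k)"
    unfolding frob2_def by (simp add: power2_eq_square)
  also have "\<dots> = (\<Sum>a<2. \<Sum>b<2. \<Sum>c<2. proj (tucker X X Z H) p q X X Z a b c * H a b c)"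
    by (rule inner_tucker)
  also have "\<dots> = (\<Sum>a<2. \<Sum>b<2. \<Sum>c<2. H a b c * H a b c)"
    using proj_tucker[OF assms] by (intro sum.cong refl) auto
  finally show ?thesis unfolding frob2_def by (simp add: power2_eq_square)
qed

lemma frob2_diff: "frob2 (\<lambda>i j k. B i j k - T i j k) p q r =
   frob2 B p q r - 2 * (\<Sum>i<p. \<Sum>j<q. \<Sum>k<r. B i j k * T i j k) + frob2 T p q r"
  unfolding frob2_def
  by (simp add: power2_diff sum.distrib sum_subtractf sum_distrib_left mult.assoc)

lemma resid:
  assumes "orth2 p X" "orth2 q Z"
  shows "frob2 (\<lambda>i j k. B i j k - tucker X X Z H i j k) p p q =
    frob2 B p p q - frob2 (proj B p q X X Z) 2 2 2 + frob2 (\<lambda>a b c. proj B p q X X Z a b c - H a b c) 2 2 2"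
  unfolding frob2_diff inner_tucker frob2_tucker[OF assms]
  by (simp add: frob2_diff)

lemma frob2_nonneg: "frob2 T p q r \<ge> 0"
  unfolding frob2_def by (intro sum_nonneg) auto

definition E2 :: matrix where "E2 = (\<lambda>i a. if i = a then 1 else 0)"

lemma orth2_E2: assumes "p \<ge> 2" shows "orth2 p E2"
proof -
  have "(\<Sum>i<p. E2 i a * E2 i b) = (if a = b then 1 else 0)" if "a < 2" "b < 2" for a b
  proof -
    have "(\<Sum>i<p. E2 i a * E2 i b) = (\<Sum>i\<in>{a}. (if a = b then 1 else 0))"
      by (rule sum.mono_neutral_cong_right) (use that assms in \<open>auto simp: E2_def\<close>)
    then show ?thesis by simp
  qed
  then show ?thesis unfolding orth2_def by auto
qed

lemma phi_upper:
  assumes "orth2 p X" "orth2 q Z"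
  shows "phi B p q \<le> frob2 B p p q - gv B p q X Z"
proof -
  let ?S = "{frob2 (\<lambda>i j l. B i j l - tucker X X Z H i j l) p p q | X Z H. orth2 p X \<and> orth2 q Z}"
  have "bdd_below ?S" by (rule bdd_belowI[of _ 0]) (auto simp: frob2_nonneg)
  moreover have "frob2 (\<lambda>i j l. B i j l - tucker X X Z (proj B p q X X Z) i j l) p p q \<in> ?S"
    using assms by blast
  ultimately have "phi B p q \<le> frob2 (\<lambda>i j l. B i j l - tucker X X Z (proj B p q X X Z) i j l) p p q"
    unfolding phi_def by (rule cInf_lower[rotated])
  also have "\<dots> = frob2 B p p q - gv B p q X Z"
    using resid[OF assms, of B "proj B p q X X Z"] unfolding gv_def frob2_def by simp
  finally show ?thesis .
qed

lemma phi_lower: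
  assumes "p \<ge> 2" "q \<ge> 2" and M: "\<And>X Z. orth2 p X \<Longrightarrow> orth2 q Z \<Longrightarrow> gv B p q X Z \<le> M"
  shows "frob2 B p p q - M \<le> phi B p q"
  unfolding phi_def
proof (rule cInf_greatest)
  show "{frob2 (\<lambda>i j l. B i j l - tucker X X Z H i j l) p p q | X Z H. orth2 p X \<and> orth2 q Z} \<noteq> {}"
    using orth2_E2 assms by blast
  fix x assume "x \<in> {frob2 (\<lambda>i j l. B i j l - tucker X X Z H i j l) p p q | X Z H. orth2 p X \<and> orth2 q Z}"
  then obtain X Z H where x: "x = frob2 (\<lambda>i j l. B i j l - tucker X X Z H i j l) p p q" and o: "orth2 p X" "orth2 q Z"
    by blast
  have "frob2 B p p q - M \<le> frob2 B p p q - gv B p q X Z" using M[OF o] by simp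
  also have "\<dots> \<le> x" unfolding x resid[OF o] gv_def using frob2_nonneg by simp
  finally show "frob2 B p p q - M \<le> x" .
qed
definition isblock :: "tensor3 \<Rightarrow> tensor3 \<Rightarrow> tensor3 \<Rightarrow> nat \<Rightarrow> nat \<Rightarrow> nat \<Rightarrow> bool" where
  "isblock A A1 A2 m1 m2 n \<longleftrightarrow> (\<forall>i<m1 + m2. \<forall>j<m1 + m2. \<forall>k<n.
        A i j k = (if i < m1 \<and> j < m1 then A1 i j k
                   else if m1 \<le> i \<and> m1 \<le> j then A2 (i - m1) (j - m1) k else 0))"

lemma blk11: "isblock A A1 A2 m1 m2 n \<Longrightarrow> i < m1 \<Longrightarrow> j < m1 \<Longrightarrow> k < n \<Longrightarrow> A i j k = A1 i j k"
  unfolding isblock_def by auto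
lemma blk12: "isblock A A1 A2 m1 m2 n \<Longrightarrow> i < m1 \<Longrightarrow> j < m2 \<Longrightarrow> k < n \<Longrightarrow> A i (j + m1) k = 0"
  unfolding isblock_def by auto
lemma blk21: "isblock A A1 A2 m1 m2 n \<Longrightarrow> i < m2 \<Longrightarrow> j < m1 \<Longrightarrow> k < n \<Longrightarrow> A (i + m1) j k = 0"
  unfolding isblock_def by auto
lemma blk22: "isblock A A1 A2 m1 m2 n \<Longrightarrow> i < m2 \<Longrightarrow> j < m2 \<Longrightarrow> k < n \<Longrightarrow> A (i + m1) (j + m1) k = A2 i j k"
  unfolding isblock_def by auto

lemma frob2_block:
  assumes B: "isblock A A1 A2 m1 m2 n"
  shows "frob2 A (m1+m2) (m1+m2) n = frob2 A1 m1 m1 n + frob2 A2 m2 m2 n"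
  unfolding frob2_def sum_split
  using blk11[OF B] blk12[OF B] blk21[OF B] blk22[OF B]
  by (simp add: sum.distrib)

lemma proj_block1:
  assumes B: "isblock A A1 A2 m1 m2 n" and U: "\<forall>i<m2. \<forall>a<2. U (i + m1) a = 0" and "a < 2" "b < 2"
  shows "proj A (m1+m2) n U U W a b c = proj A1 m1 n U U W a b c"
  unfolding proj_def sum_split
  using blk11[OF B] U assms(3,4)
  by (simp add: sum.distrib)

lemma proj_block2:
  assumes B: "isblock A A1 A2 m1 m2 n" and U: "\<forall>i<m1. \<forall>a<2. U i a = 0" and "a < 2" "b < 2"
  shows "proj A (m1+m2) n U U W a b c = proj A2 m2 n (\<lambda>i a. U (i + m1) a) (\<lambda>i a. U (i + m1) a) W a b c"
  unfolding proj_def sum_split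
  using blk22[OF B] U assms(3,4)
  by (simp add: sum.distrib)

lemma gv_block1:
  assumes B: "isblock A A1 A2 m1 m2 n" and U: "\<forall>i<m2. \<forall>a<2. U (i + m1) a = 0"
  shows "gv A (m1+m2) n U W = gv A1 m1 n U W"
  unfolding gv_def frob2_def using proj_block1[OF B U] by simp

lemma gv_block2:
  assumes B: "isblock A A1 A2 m1 m2 n" and U: "\<forall>i<m1. \<forall>a<2. U i a = 0"
  shows "gv A (m1+m2) n U W = gv A2 m2 n (\<lambda>i a. U (i + m1) a) W"
  unfolding gv_def frob2_def using proj_block2[OF B U] by simp

lemma orth_block1:
  assumes "orth2 (m1+m2) U" and U: "\<forall>i<m2. \<forall>a<2. U (i + m1) a = 0"
  shows "orth2 m1 U"
  using assms unfolding orth2_def sum_split by simp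

lemma orth_block2:
  assumes "orth2 (m1+m2) U" and U: "\<forall>i<m1. \<forall>a<2. U i a = 0"
  shows "orth2 m2 (\<lambda>i a. U (i + m1) a)"
  using assms unfolding orth2_def sum_split by simp

lemma case1:
  assumes B: "isblock A A1 A2 m1 m2 n" and d: "m1 + m2 \<ge> 2" "n \<ge> 2"
    and oU: "orth2 (m1+m2) U" and oW: "orth2 n W"
    and mx: "\<And>X Z. orth2 (m1+m2) X \<Longrightarrow> orth2 n Z \<Longrightarrow> gv A (m1+m2) n X Z \<le> gv A (m1+m2) n U W"
    and U: "\<forall>i<m2. \<forall>a<2. U (i + m1) a = 0"
  shows "phi A1 m1 n + frob2 A2 m2 m2 n \<le> phi A (m1+m2) n"
proof -
  have "frob2 A (m1+m2) (m1+m2) n - gv A (m1+m2) n U W \<le> phi A (m1+m2) n"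
    by (rule phi_lower[OF d mx])
  moreover have "phi A1 m1 n \<le> frob2 A1 m1 m1 n - gv A1 m1 n U W"
    by (rule phi_upper[OF orth_block1[OF oU U] oW])
  ultimately show ?thesis using gv_block1[OF B U, of W] frob2_block[OF B] by simp
qed

lemma case2:
  assumes B: "isblock A A1 A2 m1 m2 n" and d: "m1 + m2 \<ge> 2" "n \<ge> 2"
    and oU: "orth2 (m1+m2) U" and oW: "orth2 n W"
    and mx: "\<And>X Z. orth2 (m1+m2) X \<Longrightarrow> orth2 n Z \<Longrightarrow> gv A (m1+m2) n X Z \<le> gv A (m1+m2) n U W"
    and U: "\<forall>i<m1. \<forall>a<2. U i a = 0"
  shows "phi A2 m2 n + frob2 A1 m1 m1 n \<le> phi A (m1+m2) n"
proof -
  have "frob2 A (m1+m2) (m1+m2) n - gv A (m1+m2) n U W \<le> phi A (m1+m2) n"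
    by (rule phi_lower[OF d mx])
  moreover have "phi A2 m2 n \<le> frob2 A2 m2 m2 n - gv A2 m2 n (\<lambda>i a. U (i + m1) a) W"
    by (rule phi_upper[OF orth_block2[OF oU U] oW])
  ultimately show ?thesis using gv_block2[OF B U, of W] frob2_block[OF B] by simp
qed
lemma best_iff: "best222 A m n U W \<longleftrightarrow> orth2 m U \<and> orth2 n W \<and>
   (\<forall>X Z. orth2 m X \<and> orth2 n Z \<longrightarrow> gv A m n X Z \<le> gv A m n U W)"
  unfolding best222_def gv_def by simp

definition flipD :: "nat \<Rightarrow> matrix \<Rightarrow> matrix" where
  "flipD m1 U = (\<lambda>i a. if i < m1 then U i a else - U i a)"

lemma proj_flip:
  assumes B: "isblock A A1 A2 m1 m2 n"
  shows "proj A (m1+m2) n (flipD m1 U) (flipD m1 U) W a b c = proj A (m1+m2) n U U W a b c"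
  unfolding proj_def sum_split flipD_def
  using blk12[OF B] blk21[OF B]
  by (simp add: sum.distrib)

lemma gv_flip:
  assumes B: "isblock A A1 A2 m1 m2 n"
  shows "gv A (m1+m2) n (flipD m1 U) W = gv A (m1+m2) n U W"
  unfolding gv_def frob2_def proj_flip[OF B] ..

lemma orth_flip: "orth2 (m1+m2) (flipD m1 U) = orth2 (m1+m2) U"
  unfolding orth2_def sum_split flipD_def by simp

lemma sum_lin:
  fixes f g h k :: "nat \<Rightarrow> real"
  assumes "\<forall>i<p. f i = g i * \<alpha> + h i * \<beta>"
  shows "(\<Sum>i<p. k i * f i) = \<alpha> * (\<Sum>i<p. k i * g i) + \<beta> * (\<Sum>i<p. k i * h i)"
proof -
  have "(\<Sum>i<p. k i * f i) = (\<Sum>i<p. \<alpha> * (k i * g i) + \<beta> * (k i * h i))"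
    using assms by (intro sum.cong) (simp_all add: ring_distribs mult_ac)
  then show ?thesis by (simp add: sum.distrib sum_distrib_left)
qed

lemma gram_case:
  assumes B: "isblock A A1 A2 m1 m2 n" and d: "m1 + m2 \<ge> 2" "n \<ge> 2"
    and oU: "orth2 (m1+m2) U" and oW: "orth2 n W"
    and mx: "\<And>X Z. orth2 (m1+m2) X \<Longrightarrow> orth2 n Z \<Longrightarrow> gv A (m1+m2) n X Z \<le> gv A (m1+m2) n U W"
    and uniq: "unique_best222 A (m1 + m2) n"
    and ineq1: "phi A (m1 + m2) n < phi A1 m1 n + frob2 A2 m2 m2 n"
    and ineq2: "phi A (m1 + m2) n < phi A2 m2 n + frob2 A1 m1 m1 n"
  shows "\<exists>c s. c\<^sup>2 + s\<^sup>2 = 1 \<and> (\<forall>i<m1. U i 1 * c - U i 0 * s = 0) \<and>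
     (\<forall>i<m2. U (i+m1) 0 * c + U (i+m1) 1 * s = 0)"
proof -
  have b1: "best222 A (m1+m2) n U W" using oU oW mx by (auto simp: best_iff)
  have b2: "best222 A (m1+m2) n (flipD m1 U) W" using oU oW mx
    by (auto simp: best_iff gv_flip[OF B] orth_flip)
  obtain Q Q3 where Q: "orthogonal2 Q"
    and QU: "\<forall>i<m1+m2. \<forall>a<2. flipD m1 U i a = (\<Sum>b<2. U i b * Q b a)"
    using uniq b1 b2 unfolding unique_best222_def equiv222_def by blast
  define a where "a = Q 0 0"
  define b where "b = Q 1 0"
  define c where "c = Q 0 1"
  define e where "e = Q 1 1"
  have QU0: "flipD m1 U i 0 = U i 0 * a + U i 1 * b" and QU1: "flipD m1 U i 1 = U i 0 * c + U i 1 * e"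
    if "i < m1 + m2" for i
    using QU[rule_format, OF that, of 0] QU[rule_format, OF that, of 1]
    unfolding a_def b_def c_def e_def by (simp_all add: sum2)
  have r1: "\<forall>i<m1. U i 0 = U i 0 * a + U i 1 * b" "\<forall>i<m1. U i 1 = U i 0 * c + U i 1 * e"
  proof (safe)
    fix i assume i: "i < m1"
    then have "i < m1 + m2" by simp
    from QU0[OF this] QU1[OF this] i show "U i 0 = U i 0 * a + U i 1 * b" "U i 1 = U i 0 * c + U i 1 * e"
      unfolding flipD_def by simp_all
  qed
  have r2: "\<forall>i<m2. U (i+m1) 0 = U (i+m1) 0 * (-a) + U (i+m1) 1 * (-b)"
     "\<forall>i<m2. U (i+m1) 1 = U (i+m1) 0 * (-c) + U (i+m1) 1 * (-e)"
  proof (safe)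
    fix i assume "i < m2"
    then have "i + m1 < m1 + m2" by simp
    from QU0[OF this] QU1[OF this] show "U (i+m1) 0 = U (i+m1) 0 * (-a) + U (i+m1) 1 * (-b)"
      "U (i+m1) 1 = U (i+m1) 0 * (-c) + U (i+m1) 1 * (-e)" unfolding flipD_def by simp_all
  qed
  define p where "p = (\<Sum>i<m1. U i 0 * U i 0)"
  define q where "q = (\<Sum>i<m1. U i 0 * U i 1)"
  define r where "r = (\<Sum>i<m1. U i 1 * U i 1)"
  define p' where "p' = (\<Sum>i<m2. U (i+m1) 0 * U (i+m1) 0)"
  define q' where "q' = (\<Sum>i<m2. U (i+m1) 0 * U (i+m1) 1)"
  define r' where "r' = (\<Sum>i<m2. U (i+m1) 1 * U (i+m1) 1)"
  have q1: "(\<Sum>i<m1. U i 1 * U i 0) = q" unfolding q_def by (simp add: mult.commute)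
  have q2: "(\<Sum>i<m2. U (i+m1) 1 * U (i+m1) 0) = q'" unfolding q'_def by (simp add: mult.commute)
  have o: "p + p' = 1" "r + r' = 1" "q + q' = 0"
    using oU unfolding orth2_def sum_split p_def p'_def r_def r'_def q_def q'_def
    by (auto dest!: spec[of _ 0] spec[of _ 1])
  have e1: "p = a * p + b * q" using sum_lin[OF r1(1), of "\<lambda>i. U i 0"] unfolding p_def q_def .
  have e2: "q = c * p + e * q" using sum_lin[OF r1(2), of "\<lambda>i. U i 0"] unfolding p_def q_def .
  have e3: "q = a * q + b * r" using sum_lin[OF r1(1), of "\<lambda>i. U i 1"] q1 unfolding r_def by simp
  have e4: "r = c * q + e * r" using sum_lin[OF r1(2), of "\<lambda>i. U i 1"] q1 unfolding r_def by simp
  have f1: "p' = -a * p' - b * q'" using sum_lin[OF r2(1), of "\<lambda>i. U (i+m1) 0"] unfolding p'_def q'_def by simp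
  have f2: "q' = -c * p' - e * q'" using sum_lin[OF r2(2), of "\<lambda>i. U (i+m1) 0"] unfolding p'_def q'_def by simp
  have f3: "q' = -a * q' - b * r'" using sum_lin[OF r2(1), of "\<lambda>i. U (i+m1) 1"] q2 unfolding r'_def by simp
  have f4: "r' = -c * q' - e * r'" using sum_lin[OF r2(2), of "\<lambda>i. U (i+m1) 1"] q2 unfolding r'_def by simp
  have o': "p' = 1 - p" "q' = - q" "r' = 1 - r" using o by linarith+
  have av: "a = 2*p - 1" using e1 f1 unfolding o' by (simp add: algebra_simps)
  have cv: "c = 2*q" using e2 f2 unfolding o' by (simp add: algebra_simps)
  have bv: "b = 2*q" using e3 f3 unfolding o' by (simp add: algebra_simps)
  have ev: "e = 2*r - 1" using e4 f4 unfolding o' by (simp add: algebra_simps)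
  have x: "\<forall>i<m1. U i 0 = U i 0 * p + U i 1 * q" "\<forall>i<m1. U i 1 = U i 0 * q + U i 1 * r"
    using r1 unfolding av bv cv ev by (auto simp: algebra_simps)
  have y: "\<forall>i<m2. U (i+m1) 0 * p + U (i+m1) 1 * q = 0" "\<forall>i<m2. U (i+m1) 0 * q + U (i+m1) 1 * r = 0"
    using r2 unfolding av bv cv ev by (auto simp: algebra_simps)
  have i1: "p = p * p + q * q" using sum_lin[OF x(1), of "\<lambda>i. U i 0"] unfolding p_def q_def by simp
  have i2: "q = q * p + r * q" using sum_lin[OF x(2), of "\<lambda>i. U i 0"] unfolding p_def q_def r_def by simp
  have i3: "r = q * q + r * r" using sum_lin[OF x(2), of "\<lambda>i. U i 1"] q1 unfolding r_def by simp
  show ?thesis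
  proof (cases "q = 0")
    case True
    then have pp: "p = 0 \<or> p = 1" and rr: "r = 0 \<or> r = 1" using i1 i3 by auto
    show ?thesis
    proof (cases "p = 1 \<and> r = 1")
      case True
      then have "\<forall>i<m2. \<forall>a<2. U (i + m1) a = 0" using y \<open>q = 0\<close> by (auto simp: less_2_cases_iff)
      from case1[OF B d oU oW mx this] ineq1 show ?thesis by simp
    next
      case F1: False
      show ?thesis
      proof (cases "p = 0 \<and> r = 0")
        case True
        then have "\<forall>i<m1. \<forall>a<2. U i a = 0" using x \<open>q = 0\<close> by (auto simp: less_2_cases_iff)
        from case2[OF B d oU oW mx this] ineq2 show ?thesis by simp
      next
        case False
        then have "(p = 1 \<and> r = 0) \<or> (p = 0 \<and> r = 1)" using F1 pp rr by auto
        then show ?thesis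
        proof
          assume h: "p = 1 \<and> r = 0"
          show ?thesis
            by (rule exI[of _ 1], rule exI[of _ 0]) (use x y h \<open>q = 0\<close> in auto)
        next
          assume h: "p = 0 \<and> r = 1"
          show ?thesis
            by (rule exI[of _ 0], rule exI[of _ 1]) (use x y h \<open>q = 0\<close> in auto)
        qed
      qed
    qed
  next
    case False
    have "q * (p + r - 1) = 0" using i2 by (simp add: algebra_simps)
    then have pr: "p + r = 1" using False by simp
    have qq: "q * q = p * (1 - p)" using i1 by (simp add: algebra_simps)
    moreover have "q * q > 0" using False not_real_square_gt_zero by blast
    ultimately have p0: "p > 0"
    proof -
      assume a1: "q * q = p * (1 - p)" and a2: "q * q > 0"
      show "p > 0"
      proof (rule ccontr)
        assume "\<not> p > 0"
        then have "p * (1 - p) \<le> 0" by (intro mult_nonpos_nonneg) auto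
        then show False using a1 a2 by linarith
      qed
    qed
    define c0 where "c0 = sqrt p"
    define s0 where "s0 = q / sqrt p"
    have sp: "sqrt p * sqrt p = p" using p0 by simp
    have sp0: "sqrt p \<noteq> 0" using p0 by simp
    have gen1: "u * t - v * (q / t) = (u * (t*t) - v * q) / t" if "t \<noteq> 0" for t u v :: real
      using that by (simp add: field_simps)
    have gen2: "u * t + v * (q / t) = (u * (t*t) + v * q) / t" if "t \<noteq> 0" for t u v :: real
      using that by (simp add: field_simps)
    show ?thesis
    proof (intro exI conjI allI impI)
      have "s0\<^sup>2 = q * q / p" unfolding s0_def power2_eq_square using sp by simp
      moreover have "c0\<^sup>2 = p" unfolding c0_def using p0 by simp
      ultimately have "c0\<^sup>2 + s0\<^sup>2 = (p * p + q * q) / p" using p0 by (simp add: field_simps)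
      then show "c0\<^sup>2 + s0\<^sup>2 = 1" using i1 p0 by simp
      fix i assume i: "i < m1"
      have h: "U i 1 = U i 0 * q + U i 1 * r" using x(2) i by simp
      have rv: "r = 1 - p" using pr by simp
      have "U i 1 * p - U i 0 * q = 0" using h unfolding rv by (simp add: algebra_simps)
      then show "U i 1 * c0 - U i 0 * s0 = 0" unfolding c0_def s0_def gen1[OF sp0] sp by simp
    next
      fix i assume i: "i < m2"
      have "U (i+m1) 0 * p + U (i+m1) 1 * q = 0" using y(1) i by simp
      then show "U (i+m1) 0 * c0 + U (i+m1) 1 * s0 = 0" unfolding c0_def s0_def gen2[OF sp0] sp by simp
    qed
  qed
qed
lemma rot_id:
  fixes c s :: real and P :: "nat \<Rightarrow> nat \<Rightarrow> real"
  assumes "c\<^sup>2 + s\<^sup>2 = 1"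
  shows "(\<Sum>a<(2::nat). \<Sum>b<(2::nat). ((if a = 0 then c else -s) * (if b = 0 then c else -s) * P 0 0
     + (if a = 0 then c else -s) * (if b = 0 then s else c) * P 0 1
     + (if a = 0 then s else c) * (if b = 0 then c else -s) * P 1 0
     + (if a = 0 then s else c) * (if b = 0 then s else c) * P 1 1)\<^sup>2) = (\<Sum>a<2. \<Sum>b<2. (P a b)\<^sup>2)"
  using assms by (simp add: sum2) algebra

definition rot :: "real \<Rightarrow> real \<Rightarrow> matrix \<Rightarrow> matrix" where
  "rot c s U = (\<lambda>i a. U i 0 * (if a = 0 then c else -s) + U i 1 * (if a = 0 then s else c))"

lemma proj_lin:
  "proj A m n (rot c s X) (rot c s X) W a b k =
    (if a = 0 then c else -s) * (if b = 0 then c else -s) * proj A m n X X W 0 0 k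
  + (if a = 0 then c else -s) * (if b = 0 then s else c) * proj A m n X X W 0 1 k
  + (if a = 0 then s else c) * (if b = 0 then c else -s) * proj A m n X X W 1 0 k
  + (if a = 0 then s else c) * (if b = 0 then s else c) * proj A m n X X W 1 1 k"
  unfolding proj_def rot_def
  by (simp add: sum.distrib sum_distrib_left ring_distribs mult_ac)

lemma gv_rot:
  assumes "c\<^sup>2 + s\<^sup>2 = 1"
  shows "gv A m n (rot c s U) W = gv A m n U W"
proof -
  have "gv A m n (rot c s U) W = (\<Sum>k<2. \<Sum>a<2. \<Sum>b<2. (proj A m n (rot c s U) (rot c s U) W a b k)\<^sup>2)"
    unfolding gv_def frob2_def by (simp add: sum2)
  also have "\<dots> = (\<Sum>k<2. \<Sum>a<2. \<Sum>b<2. (proj A m n U U W a b k)\<^sup>2)"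
    unfolding proj_lin
  proof (rule sum.cong[OF refl])
    fix k show "(\<Sum>a<(2::nat). \<Sum>b<(2::nat). ((if a = 0 then c else - s) * (if b = 0 then c else - s) * proj A m n U U W 0 0 k +
               (if a = 0 then c else - s) * (if b = 0 then s else c) * proj A m n U U W 0 1 k +
               (if a = 0 then s else c) * (if b = 0 then c else - s) * proj A m n U U W 1 0 k +
               (if a = 0 then s else c) * (if b = 0 then s else c) * proj A m n U U W 1 1 k)\<^sup>2) =
         (\<Sum>a<2. \<Sum>b<2. (proj A m n U U W a b k)\<^sup>2)"
      using rot_id[OF assms, of "\<lambda>a b. proj A m n U U W a b k"] by simp
  qed
  also have "\<dots> = gv A m n U W"
    unfolding gv_def frob2_def by (simp add: sum2)
  finally show ?thesis .
qed

lemma rot0: "rot c s U i 0 = U i 0 * c + U i 1 * s" unfolding rot_def by simp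
lemma rot1: "rot c s U i 1 = U i 0 * (-s) + U i 1 * c" unfolding rot_def by simp

lemma sum_quad:
  fixes x y :: "nat \<Rightarrow> real"
  shows "(\<Sum>i<p. (x i * a + y i * b) * (x i * c + y i * d)) =
    a*c*(\<Sum>i<p. x i*x i) + (a*d + b*c)*(\<Sum>i<p. x i*y i) + b*d*(\<Sum>i<p. y i * y i)"
proof -
  have "(\<Sum>i<p. (x i * a + y i * b) * (x i * c + y i * d)) =
     (\<Sum>i<p. a*c*(x i*x i) + (a*d + b*c)*(x i*y i) + b*d*(y i * y i))"
    by (rule sum.cong) (simp_all add: algebra_simps)
  then show ?thesis by (simp add: sum.distrib sum_distrib_left)
qed

lemma orth_rot:
  assumes "c\<^sup>2 + s\<^sup>2 = 1" "orth2 p U"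
  shows "orth2 p (rot c s U)"
proof -
  have o: "(\<Sum>i<p. U i 0 * U i 0) = 1" "(\<Sum>i<p. U i 1 * U i 1) = 1" "(\<Sum>i<p. U i 0 * U i 1) = 0"
    using assms(2) unfolding orth2_alt by auto
  have cs: "c * c + s * s = 1" using assms(1) by (simp add: power2_eq_square)
  show ?thesis unfolding orth2_alt rot0 rot1 sum_quad o
    using cs by (simp add: algebra_simps)
qed
lemma swap3: "(\<Sum>i\<in>I. \<Sum>j\<in>J. \<Sum>k\<in>K. f i j k) = (\<Sum>k\<in>K. \<Sum>i\<in>I. \<Sum>j\<in>J. f i j k)"
proof -
  have "(\<Sum>i\<in>I. \<Sum>j\<in>J. \<Sum>k\<in>K. f i j k) = (\<Sum>i\<in>I. \<Sum>k\<in>K. \<Sum>j\<in>J. f i j k)"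
    by (rule sum.cong[OF refl], rule sum.swap)
  also have "\<dots> = (\<Sum>k\<in>K. \<Sum>i\<in>I. \<Sum>j\<in>J. f i j k)" by (rule sum.swap)
  finally show ?thesis .
qed

definition SS :: "tensor3 \<Rightarrow> nat \<Rightarrow> matrix \<Rightarrow> nat \<Rightarrow> nat \<Rightarrow> nat \<Rightarrow> real" where
  "SS A m V a b k = (\<Sum>i<m. \<Sum>j<m. V i a * V j b * A i j k)"

lemma proj_SS: "proj A m n V V Z a b c = (\<Sum>k<n. Z k c * SS A m V a b k)"
  unfolding proj_def SS_def
  by (subst swap3) (simp add: sum_distrib_left mult_ac)

lemma SS_block:
  assumes B: "isblock A A1 A2 m1 m2 n" and V1: "\<forall>i<m1. V i 1 = 0" and V2: "\<forall>i<m2. V (i+m1) 0 = 0"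
    and k: "k < n"
  shows "SS A (m1+m2) V 0 1 k = 0" "SS A (m1+m2) V 1 0 k = 0"
  unfolding SS_def sum_split using V1 V2 blk12[OF B _ _ k] blk21[OF B _ _ k] by simp_all

lemma gv_SS:
  assumes B: "isblock A A1 A2 m1 m2 n" and V1: "\<forall>i<m1. V i 1 = 0" and V2: "\<forall>i<m2. V (i+m1) 0 = 0"
  shows "gv A (m1+m2) n V Z = (\<Sum>c<2. (\<Sum>k<n. Z k c * SS A (m1+m2) V 0 0 k)\<^sup>2 + (\<Sum>k<n. Z k c * SS A (m1+m2) V 1 1 k)\<^sup>2)"
proof -
  have z: "(\<Sum>k<n. Z k c * SS A (m1+m2) V 0 1 k) = 0" "(\<Sum>k<n. Z k c * SS A (m1+m2) V 1 0 k) = 0" for c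
    using SS_block[OF B V1 V2] by simp_all
  show ?thesis unfolding gv_def frob2_def proj_SS using z by (simp add: sum2)
qed

lemma bessel:
  fixes s :: "nat \<Rightarrow> real"
  assumes "orth2 n Z"
  shows "(\<Sum>c<2. (\<Sum>k<n. Z k c * s k)\<^sup>2) \<le> (\<Sum>k<n. (s k)\<^sup>2)"
proof -
  define a where "a = (\<Sum>k<n. Z k 0 * s k)"
  define b where "b = (\<Sum>k<n. Z k 1 * s k)"
  have o: "(\<Sum>i<n. Z i 0 * Z i 0) = 1" "(\<Sum>i<n. Z i 1 * Z i 1) = 1" "(\<Sum>i<n. Z i 0 * Z i 1) = 0"
    using assms unfolding orth2_alt by auto
  define ca where "ca = -2*a"
  define cb where "cb = -2*b"
  define caa where "caa = a*a"
  define cab where "cab = 2*a*b"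
  define cbb where "cbb = b*b"
  have "(\<Sum>k<n. (s k - a * Z k 0 - b * Z k 1)\<^sup>2) = (\<Sum>k<n. (s k)\<^sup>2 + ca*(Z k 0 * s k) + cb*(Z k 1 * s k)
      + caa*(Z k 0 * Z k 0) + cab*(Z k 0 * Z k 1) + cbb*(Z k 1 * Z k 1))"
    by (rule sum.cong) (simp_all add: ca_def cb_def caa_def cab_def cbb_def power2_eq_square algebra_simps)
  also have "\<dots> = (\<Sum>k<n. (s k)\<^sup>2) + ca*(\<Sum>k<n. Z k 0 * s k) + cb*(\<Sum>k<n. Z k 1 * s k)
      + caa*(\<Sum>k<n. Z k 0 * Z k 0) + cab*(\<Sum>k<n. Z k 0 * Z k 1) + cbb*(\<Sum>k<n. Z k 1 * Z k 1)"
    by (simp add: sum.distrib sum_distrib_left)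
  also have "\<dots> = (\<Sum>k<n. (s k)\<^sup>2) - a*a - b*b"
    unfolding o a_def[symmetric] b_def[symmetric] ca_def cb_def caa_def cbb_def by simp
  finally have eq: "(\<Sum>k<n. (s k - a * Z k 0 - b * Z k 1)\<^sup>2) = (\<Sum>k<n. (s k)\<^sup>2) - a*a - b*b" .
  have "0 \<le> (\<Sum>k<n. (s k - a * Z k 0 - b * Z k 1)\<^sup>2)" by (intro sum_nonneg) simp
  with eq have "0 \<le> (\<Sum>k<n. (s k)\<^sup>2) - a*a - b*b" by simp
  then show ?thesis unfolding a_def b_def by (simp add: sum2 power2_eq_square)
qed
lemma sum01:
  fixes f :: "nat \<Rightarrow> real"
  assumes "n \<ge> 2" "\<forall>k\<ge>2. f k = 0"
  shows "(\<Sum>k<n. f k) = f 0 + f 1"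
proof -
  have "(\<Sum>k<n. f k) = (\<Sum>k<2. f k)"
    by (rule sum.mono_neutral_right) (use assms in auto)
  then show ?thesis by (simp add: sum2)
qed

lemma perp:
  fixes z :: "nat \<Rightarrow> real"
  assumes n: "n \<ge> 2" and z: "(\<Sum>k<n. z k * z k) = 1"
  shows "\<exists>w. (\<Sum>k<n. w k * w k) = 1 \<and> (\<Sum>k<n. z k * w k) = 0"
proof (cases "z 0 * z 0 + z 1 * z 1 = 0")
  case True
  then have z0: "z 0 = 0" "z 1 = 0" by (auto simp: add_nonneg_eq_0_iff)
  define w :: "nat \<Rightarrow> real" where "w = (\<lambda>k. if k = 0 then 1 else 0)"
  have "(\<Sum>k<n. w k * w k) = 1" using sum01[OF n, of "\<lambda>k. w k * w k"] by (simp add: w_def)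
  moreover have "(\<Sum>k<n. z k * w k) = 0" using sum01[OF n, of "\<lambda>k. z k * w k"] z0 by (simp add: w_def)
  ultimately show ?thesis by blast
next
  case False
  define N where "N = z 0 * z 0 + z 1 * z 1"
  have "N \<ge> 0" unfolding N_def by (intro add_nonneg_nonneg zero_le_square)
  then have N0: "N > 0" using False unfolding N_def by linarith
  define w :: "nat \<Rightarrow> real" where "w = (\<lambda>k. (if k = 0 then - z 1 else if k = 1 then z 0 else 0) / sqrt N)"
  have "(\<Sum>k<n. w k * w k) = (z 1 * z 1 + z 0 * z 0) / (sqrt N * sqrt N)"
    using sum01[OF n, of "\<lambda>k. w k * w k"] by (simp add: w_def add_divide_distrib)
  also have "\<dots> = N / N" using N0 by (simp add: N_def add.commute)
  also have "\<dots> = 1" using N0 by simp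
  finally have "(\<Sum>k<n. w k * w k) = 1" .
  moreover have "(\<Sum>k<n. z k * w k) = 0" using sum01[OF n, of "\<lambda>k. z k * w k"]
    by (simp add: w_def field_simps)
  ultimately show ?thesis by blast
qed

lemma sq_zero:
  fixes s :: "nat \<Rightarrow> real"
  assumes "(\<Sum>k<n. s k * s k) = 0" "k < n"
  shows "s k = 0"
proof -
  have "\<forall>k\<in>{..<n}. s k * s k = 0"
    using assms(1) by (subst sum_nonneg_eq_0_iff[symmetric]) auto
  then show ?thesis using assms(2) by simp
qed

lemma unit_dir:
  fixes s :: "nat \<Rightarrow> real"
  assumes n: "n \<ge> 1"
  shows "\<exists>z \<alpha>. (\<Sum>k<n. z k * z k) = 1 \<and> (\<forall>k<n. s k = \<alpha> * z k)"
proof (cases "(\<Sum>k<n. s k * s k) = 0")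
  case True
  define z :: "nat \<Rightarrow> real" where "z = (\<lambda>k. if k = 0 then 1 else 0)"
  have "(\<Sum>k<n. z k * z k) = (\<Sum>k<n. if k = 0 then 1 else 0)" by (rule sum.cong) (auto simp: z_def)
  also have "\<dots> = 1" using n by simp
  finally have "(\<Sum>k<n. z k * z k) = 1" .
  moreover have "\<forall>k<n. s k = 0 * z k" using sq_zero[OF True] by simp
  ultimately show ?thesis by blast
next
  case False
  define N where "N = (\<Sum>k<n. s k * s k)"
  have "N \<ge> 0" unfolding N_def by (intro sum_nonneg) simp
  then have N0: "N > 0" using False unfolding N_def by linarith
  define z where "z = (\<lambda>k. s k / sqrt N)"
  have "(\<Sum>k<n. z k * z k) = N / (sqrt N * sqrt N)"
    unfolding z_def N_def by (simp add: sum_divide_distrib[symmetric] field_simps)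
  also have "\<dots> = 1" using N0 by simp
  finally have "(\<Sum>k<n. z k * z k) = 1" .
  moreover have "\<forall>k<n. s k = sqrt N * z k" unfolding z_def using N0 by simp
  ultimately show ?thesis by blast
qed

lemma ext1:
  fixes z t :: "nat \<Rightarrow> real"
  assumes n: "n \<ge> 2" and z: "(\<Sum>k<n. z k * z k) = 1"
  shows "\<exists>w \<alpha> \<beta>. (\<Sum>k<n. w k * w k) = 1 \<and> (\<Sum>k<n. z k * w k) = 0 \<and> (\<forall>k<n. t k = \<alpha> * z k + \<beta> * w k)"
proof -
  define a where "a = (\<Sum>k<n. t k * z k)"
  define r where "r = (\<lambda>k. t k - a * z k)"
  have zr: "(\<Sum>k<n. z k * r k) = 0"
  proof -
    have "(\<Sum>k<n. z k * r k) = (\<Sum>k<n. t k * z k - a * (z k * z k))"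
      unfolding r_def by (rule sum.cong) (simp_all add: algebra_simps)
    also have "\<dots> = (\<Sum>k<n. t k * z k) - a * (\<Sum>k<n. z k * z k)"
      by (simp add: sum_subtractf sum_distrib_left)
    finally have "(\<Sum>k<n. z k * r k) = (\<Sum>k<n. t k * z k) - a * (\<Sum>k<n. z k * z k)" .
    then show ?thesis using z a_def by simp
  qed
  show ?thesis
  proof (cases "(\<Sum>k<n. r k * r k) = 0")
    case True
    obtain w where w: "(\<Sum>k<n. w k * w k) = 1" "(\<Sum>k<n. z k * w k) = 0" using perp[OF n z] by blast
    have "\<forall>k<n. t k = a * z k + 0 * w k" using sq_zero[OF True] unfolding r_def by auto
    with w show ?thesis by blast
  next
    case False
    define N where "N = (\<Sum>k<n. r k * r k)"
    have "N \<ge> 0" unfolding N_def by (intro sum_nonneg) simp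
    then have N0: "N > 0" using False unfolding N_def by linarith
    define w where "w = (\<lambda>k. r k / sqrt N)"
    have "(\<Sum>k<n. w k * w k) = N / (sqrt N * sqrt N)"
      unfolding w_def N_def by (simp add: sum_divide_distrib[symmetric] field_simps)
    also have "\<dots> = 1" using N0 by simp
    finally have w1: "(\<Sum>k<n. w k * w k) = 1" .
    have "(\<Sum>k<n. z k * w k) = (\<Sum>k<n. z k * r k) / sqrt N" unfolding w_def
      by (simp add: sum_divide_distrib)
    then have w2: "(\<Sum>k<n. z k * w k) = 0" using zr by simp
    have "\<forall>k<n. t k = a * z k + sqrt N * w k" unfolding w_def r_def using N0 by simp
    with w1 w2 show ?thesis by blast
  qed
qed

lemma repr:
  fixes t :: "nat \<Rightarrow> real"
  assumes o: "orth2 n Z" and t: "\<forall>k<n. t k = Z k 0 * \<alpha> + Z k 1 * \<beta>"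
  shows "(\<Sum>c<2. (\<Sum>k<n. Z k c * t k)\<^sup>2) = (\<Sum>k<n. (t k)\<^sup>2)"
proof -
  have oo: "(\<Sum>i<n. Z i 0 * Z i 0) = 1" "(\<Sum>i<n. Z i 1 * Z i 1) = 1" "(\<Sum>i<n. Z i 0 * Z i 1) = 0"
    "(\<Sum>i<n. Z i 1 * Z i 0) = 0"
    using o unfolding orth2_alt by auto
  have a: "(\<Sum>k<n. Z k 0 * t k) = \<alpha>" using sum_lin[OF t, of "\<lambda>k. Z k 0"] oo by simp
  have b: "(\<Sum>k<n. Z k 1 * t k) = \<beta>" using sum_lin[OF t, of "\<lambda>k. Z k 1"] oo by simp
  have "(\<Sum>k<n. t k * t k) = \<alpha> * (\<Sum>k<n. t k * Z k 0) + \<beta> * (\<Sum>k<n. t k * Z k 1)"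
    using sum_lin[OF t, of t] by simp
  also have "\<dots> = \<alpha> * \<alpha> + \<beta> * \<beta>" using a b by (simp add: mult.commute)
  finally show ?thesis using a b by (simp add: sum2 power2_eq_square)
qed

lemma span2:
  fixes s t :: "nat \<Rightarrow> real"
  assumes n: "n \<ge> 2"
  shows "\<exists>Z. orth2 n Z \<and> (\<Sum>c<2. (\<Sum>k<n. Z k c * s k)\<^sup>2) = (\<Sum>k<n. (s k)\<^sup>2)
              \<and> (\<Sum>c<2. (\<Sum>k<n. Z k c * t k)\<^sup>2) = (\<Sum>k<n. (t k)\<^sup>2)"
proof -
  obtain z \<alpha> where z: "(\<Sum>k<n. z k * z k) = 1" and sz: "\<forall>k<n. s k = \<alpha> * z k"
    using unit_dir[of n s] n by auto
  obtain w \<alpha>' \<beta>' where w: "(\<Sum>k<n. w k * w k) = 1" "(\<Sum>k<n. z k * w k) = 0"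
    and tw: "\<forall>k<n. t k = \<alpha>' * z k + \<beta>' * w k"
    using ext1[OF n z, of t] by blast
  define Z :: matrix where "Z = (\<lambda>k c. if c = 0 then z k else w k)"
  have oZ: "orth2 n Z" unfolding orth2_alt Z_def using z w by (simp add: mult.commute)
  have s': "\<forall>k<n. s k = Z k 0 * \<alpha> + Z k 1 * 0" using sz by (simp add: Z_def mult.commute)
  have t': "\<forall>k<n. t k = Z k 0 * \<alpha>' + Z k 1 * \<beta>'" using tw by (simp add: Z_def mult.commute)
  show ?thesis using repr[OF oZ s'] repr[OF oZ t'] oZ by blast
qed
lemma SS_abs:
  assumes nn: "\<forall>i<m. \<forall>j<m. \<forall>k<n. A i j k \<ge> 0" and k: "k < n"
  shows "\<bar>SS A m V a b k\<bar> \<le> SS A m (\<lambda>i a. \<bar>V i a\<bar>) a b k"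
proof -
  have "\<bar>SS A m V a b k\<bar> \<le> (\<Sum>i<m. \<Sum>j<m. \<bar>V i a * V j b * A i j k\<bar>)"
    unfolding SS_def by (rule order_trans[OF sum_abs]) (intro sum_mono sum_abs)
  also have "\<dots> = SS A m (\<lambda>i a. \<bar>V i a\<bar>) a b k"
    unfolding SS_def using nn k by (intro sum.cong refl) (auto simp: abs_mult)
  finally show ?thesis .
qed

lemma sq_le: "\<bar>x\<bar> \<le> (y::real) \<Longrightarrow> x\<^sup>2 \<le> y\<^sup>2"
  by (metis abs_ge_zero abs_le_square_iff abs_of_nonneg order_trans)

lemma final_step:
  assumes B: "isblock A A1 A2 m1 m2 n" and nn: "nonneg3 A (m1+m2) n" and d: "n \<ge> 2"
    and oV: "orth2 (m1+m2) V" and oW: "orth2 n W"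
    and mx: "\<And>X Z. orth2 (m1+m2) X \<Longrightarrow> orth2 n Z \<Longrightarrow> gv A (m1+m2) n X Z \<le> gv A (m1+m2) n V W"
    and V1: "\<forall>i<m1. V i 1 = 0" and V2: "\<forall>i<m2. V (i+m1) 0 = 0"
  shows "\<exists>U W u1 u2. best222 A (m1 + m2) n U W \<and>
           (\<forall>i<m1 + m2. U i 0 = (if i < m1 then u1 i else 0) \<and>
                         U i 1 = (if i < m1 then 0 else u2 (i - m1))) \<and>
           (\<forall>i<m1. u1 i \<ge> (0::real)) \<and> (\<forall>i<m2. u2 i \<ge> (0::real))"
proof -
  define Va :: matrix where "Va = (\<lambda>i a. \<bar>V i a\<bar>)"
  have Va1: "\<forall>i<m1. Va i 1 = 0" and Va2: "\<forall>i<m2. Va (i+m1) 0 = 0" using V1 V2 by (auto simp: Va_def)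
  have oV': "(\<Sum>i<m1+m2. V i 0 * V i 0) = 1" "(\<Sum>i<m1+m2. V i 1 * V i 1) = 1"
    using oV unfolding orth2_alt by auto
  have oVa: "orth2 (m1+m2) Va"
    unfolding orth2_alt using oV' V1 V2 unfolding Va_def sum_split by (simp add: abs_mult[symmetric])
  have nn': "\<forall>i<m1+m2. \<forall>j<m1+m2. \<forall>k<n. A i j k \<ge> 0" using nn unfolding nonneg3_def by auto
  define s where "s = SS A (m1+m2) V 0 0"
  define t where "t = SS A (m1+m2) V 1 1"
  define s' where "s' = SS A (m1+m2) Va 0 0"
  define t' where "t' = SS A (m1+m2) Va 1 1"
  obtain W' where oW': "orth2 n W'" and sW': "(\<Sum>c<2. (\<Sum>k<n. W' k c * s' k)\<^sup>2) = (\<Sum>k<n. (s' k)\<^sup>2)"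
    and tW': "(\<Sum>c<2. (\<Sum>k<n. W' k c * t' k)\<^sup>2) = (\<Sum>k<n. (t' k)\<^sup>2)"
    using span2[OF d] by blast
  have "gv A (m1+m2) n V W = (\<Sum>c<2. (\<Sum>k<n. W k c * s k)\<^sup>2) + (\<Sum>c<2. (\<Sum>k<n. W k c * t k)\<^sup>2)"
    unfolding gv_SS[OF B V1 V2] s_def t_def by (simp add: sum.distrib)
  also have "\<dots> \<le> (\<Sum>k<n. (s k)\<^sup>2) + (\<Sum>k<n. (t k)\<^sup>2)"
    using bessel[OF oW, of s] bessel[OF oW, of t] by linarith
  also have "\<dots> \<le> (\<Sum>k<n. (s' k)\<^sup>2) + (\<Sum>k<n. (t' k)\<^sup>2)"
    unfolding s_def t_def s'_def t'_def Va_def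
    by (intro add_mono sum_mono sq_le SS_abs[OF nn']) auto
  also have "\<dots> = gv A (m1+m2) n Va W'"
  proof -
    have "gv A (m1+m2) n Va W' = (\<Sum>c<2. (\<Sum>k<n. W' k c * s' k)\<^sup>2) + (\<Sum>c<2. (\<Sum>k<n. W' k c * t' k)\<^sup>2)"
      unfolding gv_SS[OF B Va1 Va2] s'_def t'_def by (simp add: sum.distrib)
    then show ?thesis using sW' tW' by simp
  qed
  finally have ge: "gv A (m1+m2) n V W \<le> gv A (m1+m2) n Va W'" .
  have best: "best222 A (m1+m2) n Va W'"
    unfolding best_iff using oVa oW' mx ge by (meson order_trans)
  show ?thesis
  proof (intro exI conjI allI impI)
    show "best222 A (m1+m2) n Va W'" by (rule best)
  next
    fix i assume i: "i < m1 + m2"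
    show "Va i 0 = (if i < m1 then (\<lambda>i. \<bar>V i 0\<bar>) i else 0)"
    proof (cases "i < m1")
      case False
      then have "i - m1 < m2" "i - m1 + m1 = i" using i by auto
      then have "V i 0 = 0" using V2 by metis
      then show ?thesis using False unfolding Va_def by simp
    qed (simp add: Va_def)
    show "Va i 1 = (if i < m1 then 0 else (\<lambda>i. \<bar>V (i + m1) 1\<bar>) (i - m1))"
      using V1 unfolding Va_def by auto
  qed auto
qed

theorem mainTheorem4:
  fixes A A1 A2 :: tensor3 and m1 m2 n :: nat
  assumes dims: "m1 \<ge> 2" "m2 \<ge> 2" "n \<ge> 2"
    and sym: "sym12 A (m1 + m2) n"
    and nn: "nonneg3 A (m1 + m2) n"
    and block: "\<forall>i<m1 + m2. \<forall>j<m1 + m2. \<forall>k<n.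
        A i j k = (if i < m1 \<and> j < m1 then A1 i j k
                   else if m1 \<le> i \<and> m1 \<le> j then A2 (i - m1) (j - m1) k else 0)"
    and irr1: "irreducible3 A1 m1 n"
    and irr2: "irreducible3 A2 m2 n"
    and ineq1: "phi A (m1 + m2) n < phi A1 m1 n + frob2 A2 m2 m2 n"
    and ineq2: "phi A (m1 + m2) n < phi A2 m2 n + frob2 A1 m1 m1 n"
    and uniq: "unique_best222 A (m1 + m2) n"
  shows "\<exists>U W u1 u2. best222 A (m1 + m2) n U W \<and>
           (\<forall>i<m1 + m2. U i 0 = (if i < m1 then u1 i else 0) \<and>
                         U i 1 = (if i < m1 then 0 else u2 (i - m1))) \<and>
           (\<forall>i<m1. u1 i \<ge> (0::real)) \<and> (\<forall>i<m2. u2 i \<ge> (0::real))"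
proof -
  have B: "isblock A A1 A2 m1 m2 n" using block unfolding isblock_def .
  have d: "m1 + m2 \<ge> 2" using dims by simp
  obtain U W where oU: "orth2 (m1+m2) U" and oW: "orth2 n W"
    and mx0: "\<forall>X Z. orth2 (m1+m2) X \<and> orth2 n Z \<longrightarrow> gv A (m1+m2) n X Z \<le> gv A (m1+m2) n U W"
    using exists_best[OF d dims(3), of A] by blast
  have mx: "\<And>X Z. orth2 (m1+m2) X \<Longrightarrow> orth2 n Z \<Longrightarrow> gv A (m1+m2) n X Z \<le> gv A (m1+m2) n U W"
    using mx0 by blast
  obtain c s where cs: "c\<^sup>2 + s\<^sup>2 = 1" and h1: "\<forall>i<m1. U i 1 * c - U i 0 * s = 0"
    and h2: "\<forall>i<m2. U (i+m1) 0 * c + U (i+m1) 1 * s = 0"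
    using gram_case[OF B d dims(3) oU oW mx uniq ineq1 ineq2] by blast
  define V where "V = rot c s U"
  have oV: "orth2 (m1+m2) V" unfolding V_def by (rule orth_rot[OF cs oU])
  have gvV: "gv A (m1+m2) n V W = gv A (m1+m2) n U W" unfolding V_def by (rule gv_rot[OF cs])
  have mxV: "\<And>X Z. orth2 (m1+m2) X \<Longrightarrow> orth2 n Z \<Longrightarrow> gv A (m1+m2) n X Z \<le> gv A (m1+m2) n V W"
    using mx gvV by simp
  have V1: "\<forall>i<m1. V i 1 = 0" unfolding V_def rot1 using h1 by (auto simp: algebra_simps)
  have V2: "\<forall>i<m2. V (i+m1) 0 = 0" unfolding V_def rot0 using h2 by auto
  show ?thesis by (rule final_step[OF B nn dims(3) oV oW mxV V1 V2])
qed

end
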